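(* Let $k\ge4$ and $d\ge1$. Let $x$ be a monomial of degree $(k-2)(2^d-1)$ in $P_k$. If $\omega_1(x)<k$ and there is $r>d$ with $\omega_r(x)>0$, then $x\in P_k^-((k-2)|^d)+\mathcal A(d-1)^+P_k$.
   Context: $P_k=\mathbb F_2[x_1,\dots,x_k]$, $\deg x_i=1$, a module over the mod-2 Steenrod algebra $\mathcal A$. $\mathcal A(d-1)$ is the sub-Hopf algebra generated by $Sq^i$, $0\le i<2^d$, and $\mathcal A(d-1)^+$ its augmentation ideal. For $x=x_1^{a_1}\cdots x_k^{a_k}$, $\omega_i(x)=\sum_j\alpha_{i-1}(a_j)$, with $\alpha_r(a)$ the $r$-th binary digit; weight vectors are ordered left-lexicographically. $(k-2)|^d$ is the weight vector with first $d$ entries $k-2$ and the rest $0$; $P_k^-((k-2)|^d)$ is spanned by monomials $y$ of degree $(k-2)(2^d-1)$ with $\omega(y)<(k-2)|^d$. *)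

theory Defs
  imports Main
begin

text \<open>Monomials of P_k = F_2[x_1,...,x_k] are exponent lists of length k;
 an element of P_k is a finite set of monomials (coefficients in F_2),
 addition is symmetric difference.\<close>

type_synonym monom = "nat list"
type_synonym poly = "nat list set"

definition padd :: "poly \<Rightarrow> poly \<Rightarrow> poly" where
  "padd p q = (p - q) \<union> (q - p)"

definition is_poly :: "nat \<Rightarrow> poly \<Rightarrow> bool" where
  "is_poly k p \<longleftrightarrow> finite p \<and> (\<forall>a\<in>p. length a = k)"

definition deg :: "monom \<Rightarrow> nat" where
  "deg a = sum_list a"

text \<open>Cartan formula: Sq^i(x^a) = sum over t with |t| = i of
 prod_j binom(a_j,t_j) x^(a+t); the monomials for distinct t are distinct.\<close>
definition Sq_mon :: "nat \<Rightarrow> monom \<Rightarrow> poly" where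
  "Sq_mon i a = {map2 (+) a t | t. length t = length a \<and> sum_list t = i \<and>
      (\<forall>j<length a. odd ((a ! j) choose (t ! j)))}"

definition Sq :: "nat \<Rightarrow> poly \<Rightarrow> poly" where
  "Sq i p = {b. odd (card {a\<in>p. b \<in> Sq_mon i a})}"

text \<open>A(d-1)^+ P_k: the F_2-span of all Sq^i f, 0 < i < 2^d, f \<in> P_k.
 (Every element of the augmentation ideal of A(d-1) is a sum of words
 Sq^{i_1}...Sq^{i_t}, t \<ge> 1, in the generators, so this is exactly
 A(d-1)^+ P_k.)\<close>
inductive_set hit :: "nat \<Rightarrow> nat \<Rightarrow> poly set" for k d where
  hit_zero: "{} \<in> hit k d"
| hit_step: "\<lbrakk>is_poly k f; 0 < i; i < 2 ^ d; g \<in> hit k d\<rbrakk>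
      \<Longrightarrow> padd (Sq i f) g \<in> hit k d"

definition omega :: "nat \<Rightarrow> monom \<Rightarrow> nat" where
  "omega i a = sum_list (map (\<lambda>aj. (aj div 2 ^ (i - 1)) mod 2) a)"

definition wlex_less :: "(nat \<Rightarrow> nat) \<Rightarrow> (nat \<Rightarrow> nat) \<Rightarrow> bool" where
  "wlex_less u v \<longleftrightarrow> (\<exists>m\<ge>1. (\<forall>i. 1 \<le> i \<and> i < m \<longrightarrow> u i = v i) \<and> u m < v m)"

definition wvec :: "nat \<Rightarrow> nat \<Rightarrow> nat \<Rightarrow> nat" where
  "wvec k d i = (if 1 \<le> i \<and> i \<le> d then k - 2 else 0)"

definition minus_mons :: "nat \<Rightarrow> nat \<Rightarrow> monom set" where
  "minus_mons k d = {y. length y = k \<and> deg y = (k - 2) * (2 ^ d - 1) \<and>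
      wlex_less (\<lambda>i. omega i y) (wvec k d)}"

definition Pminus :: "nat \<Rightarrow> nat \<Rightarrow> poly set" where
  "Pminus k d = {p. finite p \<and> p \<subseteq> minus_mons k d}"

end

theory Submission
  imports Defs "HOL-Number_Theory.Cong"
begin



lemma choose_ee: "odd ((2*a) choose (2*b)) \<longleftrightarrow> odd (a choose b)"
proof (induction a arbitrary: b)
  case 0 then show ?case by (cases b) auto
next
  case (Suc a)
  show ?case
  proof (cases b)
    case 0 then show ?thesis by simp
  next
    case (Suc c)
    have e: "2 * Suc a = Suc (Suc (2*a))" "2*b = Suc (Suc (2*c))" "2*(c+1) = Suc (Suc (2*c))" using Suc by auto
    have X: "(2 * Suc a) choose (2*b) = ((2*a) choose (2*c)) + 2 * ((2*a) choose Suc (2*c)) + ((2*a) choose (2*(c+1)))"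
      unfolding e by simp
    have "odd ((2 * Suc a) choose (2*b)) \<longleftrightarrow> odd (((2*a) choose (2*c)) + ((2*a) choose (2*(c+1))))" 
      unfolding X by presburger
    also have "\<dots> \<longleftrightarrow> odd ((a choose c) + (a choose (c+1)))" using Suc.IH[of c] Suc.IH[of "c+1"] by auto
    also have "\<dots> \<longleftrightarrow> odd (Suc a choose b)" using Suc by simp
    finally show ?thesis .
  qed
qed

lemma aux_even: "(2*m) * (X::nat) = N * (2*b+1) \<Longrightarrow> even N"
proof -
  assume h: "(2*m) * X = N * (2*b+1)"
  have "even ((2*m) * X)" by simp
  then have "even (N * (2*b+1))" by (simp only: h)
  then show "even N" by simp
qed

lemma choose_eo: "even ((2*a) choose (2*b+1))"
proof (cases a)
  case 0 then show ?thesis by simp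
next
  case (Suc a')
  define N where "N = (Suc (2*a'+1) choose Suc (2*b))"
  have E: "Suc (2*a'+1) * ((2*a'+1) choose (2*b)) = N * Suc (2*b)"
    unfolding N_def by (rule Suc_times_binomial_eq)
  have e: "Suc (2*a'+1) = 2*a" "Suc (2*b) = 2*b+1" using Suc by auto
  have "2*a * ((2*a'+1) choose (2*b)) = N * (2*b+1)" using E by (simp only: e)
  then have "even N" by (rule aux_even)
  moreover have "N = ((2*a) choose (2*b+1))" by (simp only: N_def e)
  ultimately show ?thesis by simp
qed

lemma choose_oe: "odd ((2*a+1) choose (2*b)) \<longleftrightarrow> odd (a choose b)"
proof (cases b)
  case 0 then show ?thesis by simp
next
  case (Suc c)
  have e1: "2*a+1 = Suc (2*a)" "2*b = Suc (2*c+1)" using Suc by auto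
  have "(2*a+1) choose (2*b) = ((2*a) choose (2*c+1)) + ((2*a) choose Suc (2*c+1))"
    unfolding e1 by (rule binomial_Suc_Suc)
  moreover have "Suc (2*c+1) = 2*b" using Suc by simp
  ultimately have "(2*a+1) choose (2*b) = ((2*a) choose (2*c+1)) + ((2*a) choose (2*b))" by simp
  then show ?thesis using choose_eo[of a c] choose_ee[of a b] by presburger
qed

lemma choose_oo: "odd ((2*a+1) choose (2*b+1)) \<longleftrightarrow> odd (a choose b)"
proof -
  have e1: "2*a+1 = Suc (2*a)" "2*b+1 = Suc (2*b)" by auto
  have "(2*a+1) choose (2*b+1) = ((2*a) choose (2*b)) + ((2*a) choose Suc (2*b))"
    unfolding e1 by (rule binomial_Suc_Suc)
  then have "(2*a+1) choose (2*b+1) = ((2*a) choose (2*b)) + ((2*a) choose (2*b+1))" by simp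
  then show ?thesis using choose_eo[of a b] choose_ee[of a b] by presburger
qed

lemma choose_even_t: "even t \<Longrightarrow> odd (n choose t) \<longleftrightarrow> odd ((n div 2) choose (t div 2))"
proof -
  assume "even t"
  then obtain b where t: "t = 2*b" by blast
  have "n = 2*(n div 2) \<or> n = 2*(n div 2)+1" by presburger
  then obtain a where "n = 2*a \<or> n = 2*a+1" by blast
  then show ?thesis using t choose_ee choose_oe by auto
qed

lemma choose_odd_t: "odd t \<Longrightarrow> even n \<Longrightarrow> even (n choose t)"
proof -
  assume "odd t" "even n"
  then obtain a b where "t = 2*b+1" "n = 2*a" by (auto elim!: oddE evenE)
  then show ?thesis using choose_eo by simp
qed

lemma choose_pow: "odd (n choose (2^q * u)) \<longleftrightarrow> odd ((n div 2^q) choose u)"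
proof (induction q arbitrary: n)
  case 0 then show ?case by simp
next
  case (Suc q)
  have "odd (n choose (2^Suc q * u)) \<longleftrightarrow> odd ((n div 2) choose (2^q * u))"
  proof -
    have ev: "even (2^Suc q * u)" by simp
    have "(2^Suc q * u) div 2 = 2^q * u" by simp
    then show ?thesis using choose_even_t[OF ev, of n] by simp
  qed
  also have "\<dots> \<longleftrightarrow> odd ((n div 2 div 2^q) choose u)" by (rule Suc.IH)
  also have "n div 2 div 2^q = n div 2^Suc q" by (simp add: div_mult2_eq)
  finally show ?case .
qed

lemma L1: "odd (n choose 2^q) \<longleftrightarrow> odd (n div 2^q)"
  using choose_pow[of n q 1] by simp

lemma L2: "odd u \<Longrightarrow> odd (n choose (2^q * u)) \<Longrightarrow> odd (n div 2^q)"
  using choose_pow choose_odd_t by blast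




definition V :: "nat \<Rightarrow> nat \<Rightarrow> poly set" where
  "V k d = {padd p q | p q. p \<in> Pminus k d \<and> q \<in> hit k d}"

lemma padd_comm: "padd p q = padd q p" unfolding padd_def by blast
lemma padd_assoc: "padd (padd p q) r = padd p (padd q r)" unfolding padd_def by blast
lemma padd_empty[simp]: "padd p {} = p" "padd {} p = p" unfolding padd_def by auto

lemma hit_padd: "q1 \<in> hit k d \<Longrightarrow> q2 \<in> hit k d \<Longrightarrow> padd q1 q2 \<in> hit k d"
proof (induction q1 rule: hit.induct)
  case hit_zero then show ?case by simp
next
  case (hit_step f i g)
  then show ?case by (simp add: padd_assoc hit.hit_step)
qed

lemma Pminus_padd: "p1 \<in> Pminus k d \<Longrightarrow> p2 \<in> Pminus k d \<Longrightarrow> padd p1 p2 \<in> Pminus k d"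
  unfolding Pminus_def padd_def by auto

lemma V_hit: "q \<in> hit k d \<Longrightarrow> q \<in> V k d"
proof -
  assume "q \<in> hit k d"
  moreover have "q = padd {} q" by simp
  moreover have "{} \<in> Pminus k d" unfolding Pminus_def by simp
  ultimately show ?thesis unfolding V_def by blast
qed

lemma V_empty: "{} \<in> V k d"
  by (rule V_hit, rule hit_zero)

lemma V_padd: "u \<in> V k d \<Longrightarrow> v \<in> V k d \<Longrightarrow> padd u v \<in> V k d"
proof -
  assume "u \<in> V k d" "v \<in> V k d"
  then obtain p1 q1 p2 q2 where h: "p1 \<in> Pminus k d" "q1 \<in> hit k d" "u = padd p1 q1"
    "p2 \<in> Pminus k d" "q2 \<in> hit k d" "v = padd p2 q2" unfolding V_def by blast
  have "padd u v = padd (padd p1 p2) (padd q1 q2)" unfolding h padd_def by blast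
  then show ?thesis unfolding V_def using h Pminus_padd hit_padd by blast
qed

lemma V_set: "finite R \<Longrightarrow> (\<forall>b\<in>R. {b} \<in> V k d) \<Longrightarrow> R \<in> V k d"
proof (induction R rule: finite_induct)
  case empty show ?case by (rule V_empty)
next
  case (insert b R)
  have "insert b R = padd {b} R" using insert(2) unfolding padd_def by blast
  moreover have "{b} \<in> V k d" "R \<in> V k d" using insert by auto
  ultimately show ?case using V_padd by metis
qed

lemma V_minus: "y \<in> minus_mons k d \<Longrightarrow> {y} \<in> V k d"
proof -
  assume "y \<in> minus_mons k d"
  then have "{y} \<in> Pminus k d" unfolding Pminus_def by simp
  moreover have "{y} = padd {y} {}" by simp
  ultimately show ?thesis unfolding V_def using hit_zero by blast
qed


lemma Sq_single: "Sq i {a} = Sq_mon i a"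
proof -
  have "\<And>b. {a'\<in>{a}. b \<in> Sq_mon i a'} = (if b \<in> Sq_mon i a then {a} else {})" by auto
  then show ?thesis unfolding Sq_def by auto
qed

lemma Sq_mon_finite: "finite (Sq_mon i a)"
proof -
  have "Sq_mon i a \<subseteq> (\<lambda>t. map2 (+) a t) ` {t. set t \<subseteq> {..i} \<and> length t = length a}"
  proof
    fix b assume "b \<in> Sq_mon i a"
    then obtain t where t: "b = map2 (+) a t" "length t = length a" "sum_list t = i"
      unfolding Sq_mon_def by blast
    have "set t \<subseteq> {..i}"
    proof
      fix x assume "x \<in> set t"
      then have "x \<le> sum_list t" by (rule member_le_sum_list) auto
      then show "x \<in> {..i}" using t by simp
    qed
    then show "b \<in> (\<lambda>t. map2 (+) a t) ` {t. set t \<subseteq> {..i} \<and> length t = length a}" using t by blast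
  qed
  moreover have "finite {t. set t \<subseteq> {..i} \<and> length t = length a}"
    by (rule finite_lists_length_eq) simp
  ultimately show ?thesis by (meson finite_imageI finite_subset)
qed

lemma hit_Sq_single: "length a = k \<Longrightarrow> 0 < i \<Longrightarrow> i < 2^d \<Longrightarrow> Sq_mon i a \<in> hit k d"
proof -
  assume h: "length a = k" "0 < i" "i < 2^d"
  have "is_poly k {a}" using h unfolding is_poly_def by simp
  then have "padd (Sq i {a}) {} \<in> hit k d" using h by (intro hit_step hit_zero)
  then show ?thesis by (simp add: Sq_single)
qed




definition bt :: "nat \<Rightarrow> nat \<Rightarrow> nat" where "bt q u = u div 2^q mod 2"

lemma bt_le: "bt q u \<le> 1" unfolding bt_def by simp

lemma omega_Suc: "omega (Suc q) a = (\<Sum>i<length a. bt q (a!i))"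
  unfolding omega_def bt_def by (simp add: sum_list_sum_nth atLeast0LessThan)

lemma deg_sum: "deg a = (\<Sum>i<length a. a!i)"
  unfolding deg_def by (simp add: sum_list_sum_nth atLeast0LessThan)

lemma omega_le: "omega (Suc q) a \<le> length a"
proof -
  have "(\<Sum>i<length a. bt q (a!i)) \<le> (\<Sum>i<length a. 1)" by (rule sum_mono) (rule bt_le)
  then show ?thesis by (simp add: omega_Suc)
qed

lemma mod_bits: "u mod 2^n = (\<Sum>q<n. 2^q * bt q u)"
proof (induction n)
  case 0 then show ?case by simp
next
  case (Suc n)
  have "u mod 2^Suc n = u mod (2^n * 2)" by (simp add: mult.commute)
  also have "\<dots> = 2^n * (u div 2^n mod 2) + u mod 2^n" by (rule mod_mult2_eq)
  finally show ?case using Suc by (simp add: bt_def)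
qed

lemma sum_mod_omega: "(\<Sum>i<length a. a!i mod 2^n) = (\<Sum>q<n. 2^q * omega (Suc q) a)"
proof -
  have "(\<Sum>i<length a. a!i mod 2^n) = (\<Sum>i<length a. \<Sum>q<n. 2^q * bt q (a!i))"
    by (simp add: mod_bits)
  also have "\<dots> = (\<Sum>q<n. \<Sum>i<length a. 2^q * bt q (a!i))" by (rule sum.swap)
  also have "\<dots> = (\<Sum>q<n. 2^q * omega (Suc q) a)" by (simp add: omega_Suc sum_distrib_left)
  finally show ?thesis .
qed

lemma geom: "(\<Sum>q<n. 2^q * (c::nat)) = c * (2^n - 1)"
proof (induction n)
  case 0 then show ?case by simp
next
  case (Suc n)
  have "(1::nat) \<le> 2^n" by simp
  then show ?case using Suc by (simp add: algebra_simps)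
qed

lemma bt_add: "q < m \<Longrightarrow> bt q (u + 2^m * c) = bt q u"
proof -
  assume "q < m"
  then obtain r where r: "m = Suc q + r" by (metis less_iff_Suc_add add_Suc)
  have "2^m * c = 2^q * (2 * (2^r * c))" unfolding r power_add by simp
  moreover have "(u + 2^q * (2 * (2^r * c))) div 2^q = u div 2^q + 2 * (2^r * c)" by simp
  ultimately have "(u + 2^m * c) div 2^q = u div 2^q + 2 * (2^r * c)" by (simp only:)
  then show ?thesis unfolding bt_def by simp
qed

lemma div_add: "((u::nat) + 2^m * c) div 2^m = u div 2^m + c"
  by simp

lemma bt_div: "bt q u = (u div 2^q) mod 2" by (simp add: bt_def)

lemma bt_Suc: "bt (Suc q) u = (u div 2^q div 2) mod 2"
  unfolding bt_def by (simp only: power_Suc2 div_mult2_eq)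




lemma sum_pre: "\<forall>q<n. omega (Suc q) y = K \<Longrightarrow> (\<Sum>q<n. 2^q * omega (Suc q) y) = K * (2^n - 1)"
proof -
  assume h: "\<forall>q<n. omega (Suc q) y = K"
  have "(\<Sum>q<n. 2^q * omega (Suc q) y) = (\<Sum>q<n. 2^q * K)" using h by (intro sum.cong) auto
  then show ?thesis by (simp add: geom)
qed

lemma no_full_prefix:
  assumes "length y = k" "deg y = (k-2)*(2^d-1)" "j0 < k" "y!j0 \<ge> 2^d"
    "\<forall>q<d. omega (Suc q) y = k-2"
  shows False
proof -
  have s1: "(\<Sum>i<k. y!i mod 2^d) = (k-2)*(2^d-1)"
    using sum_mod_omega[of y d] sum_pre[OF assms(5)] assms(1) by simp
  have eq1: "(\<Sum>i<k. y!i mod 2^d + 2^d * (y!i div 2^d)) = (\<Sum>i<k. y!i)"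
    by (rule sum.cong) simp_all
  have "(\<Sum>i<k. y!i) = (\<Sum>i<k. y!i mod 2^d) + (\<Sum>i<k. 2^d * (y!i div 2^d))"
    unfolding eq1[symmetric] by (rule sum.distrib)
  then have "(\<Sum>i<k. y!i) = (\<Sum>i<k. y!i mod 2^d) + 2^d * (\<Sum>i<k. y!i div 2^d)"
    by (simp only: sum_distrib_left)
  then have s2: "(\<Sum>i<k. y!i) = (k-2)*(2^d-1) + 2^d * (\<Sum>i<k. y!i div 2^d)" using s1 by simp
  have "y!j0 div 2^d \<le> (\<Sum>i<k. y!i div 2^d)"
    using assms(3) by (intro member_le_sum) auto
  moreover have "1 \<le> y!j0 div 2^d" using assms(4) by (simp add: div_greater_zero_iff Suc_le_eq)
  ultimately have "2^d \<le> 2^d * (\<Sum>i<k. y!i div 2^d)" by simp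
  then have "(\<Sum>i<k. y!i) > (k-2)*(2^d-1)" using s2 by simp
  then show False using assms(1,2) by (simp add: deg_sum)
qed

lemma arith1: "P \<ge> 1 \<Longrightarrow> Q \<ge> 1 \<Longrightarrow> (K::nat)*(P*Q-1) = K*(P-1) + P*(K*(Q-1))"
proof -
  assume "P \<ge> 1" "Q \<ge> 1"
  then obtain p q where "P = Suc p" "Q = Suc q" by (cases P; cases Q) auto
  then show ?thesis by (simp add: algebra_simps)
qed

lemma parity:
  assumes "length y = k" "deg y = (k-2)*(2^d-1)" "n < d" "\<forall>q<n. omega (Suc q) y = k-2" "k \<ge> 2"
  shows "omega (Suc n) y mod 2 = k mod 2"
proof -
  define c where "c = omega (Suc n) y"
  define K where "K = k - 2"
  define r where "r = d - n"
  have r: "d = n + r" "r \<ge> 1" using assms(3) unfolding r_def by simp_all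
  define e where "e = K * (2^r - 1)"
  have s1: "(\<Sum>i<k. y!i mod 2^Suc n) = K*(2^n-1) + 2^n*c"
    using sum_mod_omega[of y "Suc n"] sum_pre[of n y K] assms(1,4) unfolding c_def K_def by simp
  have "deg y mod 2^Suc n = (\<Sum>i<k. y!i mod 2^Suc n) mod 2^Suc n"
    using assms(1) by (simp add: deg_sum mod_sum_eq)
  moreover have "deg y = K*(2^n-1) + 2^n*e"
    unfolding assms(2) K_def[symmetric] e_def r(1) power_add by (rule arith1) simp_all
  ultimately have "[K*(2^n-1) + 2^n*e = K*(2^n-1) + 2^n*c] (mod 2^Suc n)" using s1 unfolding cong_def by simp
  then have "[2^n*e = 2^n*c] (mod 2^Suc n)" by (simp only: cong_add_lcancel_nat)
  then have "2^n * (e mod 2) = 2^n * (c mod 2)" by (simp only: cong_def power_Suc2 mod_mult_mult1)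
  then have ce: "c mod 2 = e mod 2" by simp
  define r' where "r' = r - 1"
  have rr: "r = Suc r'" using r(2) unfolding r'_def by simp
  have "(1::nat) \<le> 2^r'" by simp
  then have "odd (2 * (2::nat)^r' - 1)" by presburger
  then have "odd ((2::nat)^Suc r' - 1)" unfolding power_Suc .
  then have "odd ((2::nat)^r - 1)" unfolding rr .
  then have "even e \<longleftrightarrow> even K" unfolding e_def by simp
  then have "e mod 2 = K mod 2" by presburger
  moreover have "k = K + 2" using assms(5) unfolding K_def by simp
  ultimately show ?thesis using ce unfolding c_def by simp
qed

lemma all_ones: "(\<Sum>i<k. bt q (y!i)) = k \<Longrightarrow> i < k \<Longrightarrow> bt q (y!i) = 1"
proof (rule ccontr)
  assume h: "(\<Sum>i<k. bt q (y!i)) = k" "i < k" "bt q (y!i) \<noteq> 1"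
  then have "bt q (y!i) < 1" using bt_le[of q "y!i"] by linarith
  then have "(\<Sum>i<k. bt q (y!i)) < (\<Sum>i<k. (1::nat))"
    using h(2) by (intro sum_strict_mono_ex1) (auto simp: bt_le[simplified])
  then show False using h(1) by simp
qed

lemma some_zero: "(\<Sum>i<k. bt q (y!i)) < k \<Longrightarrow> \<exists>i<k. bt q (y!i) = 0"
proof (rule ccontr)
  assume h: "(\<Sum>i<k. bt q (y!i)) < k" "\<not> (\<exists>i<k. bt q (y!i) = 0)"
  have "\<forall>i<k. bt q (y!i) = 1"
  proof (intro allI impI)
    fix i assume "i < k"
    then have "bt q (y!i) \<noteq> 0" using h(2) by simp
    then show "bt q (y!i) = 1" using bt_le[of q "y!i"] by linarith
  qed
  then have "(\<Sum>i<k. bt q (y!i)) = (\<Sum>i<k. (1::nat))" by (intro sum.cong) auto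
  then show False using h(1) by simp
qed

lemma high_keep:
  assumes "u \<ge> 2^d" "bt n u = 1" "n < d" "h \<le> 2^n"
  shows "u - h \<ge> 2^d"
proof -
  define M where "M = (2::nat)^Suc n"
  have "u mod M = (\<Sum>q<Suc n. 2^q * bt q u)" unfolding M_def by (rule mod_bits)
  also have "\<dots> \<ge> 2^n * bt n u" by simp
  finally have m1: "u mod M \<ge> 2^n" using assms(2) by simp
  define r where "r = d - Suc n"
  have r: "d = Suc n + r" using assms(3) unfolding r_def by simp
  have "2^d = M * 2^r" unfolding M_def r power_add by simp
  then have "2^d div M = 2^r" unfolding M_def by simp
  moreover have "2^d div M \<le> u div M" using assms(1) by (rule div_le_mono)
  ultimately have "M * 2^r \<le> M * (u div M)" by simp
  then have "2^d \<le> M * (u div M)" using \<open>2^d = M * 2^r\<close> by simp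
  moreover have "u = M * (u div M) + u mod M" by simp
  ultimately show ?thesis using m1 assms(4) by linarith
qed




lemma two_sum:
  assumes "j < (k::nat)" "j' < k" "j \<noteq> j'"
  shows "(\<Sum>i<k. f i) = (\<Sum>i\<in>{..<k}-{j,j'}. f i) + f j + (f j' :: nat)"
proof -
  have "(\<Sum>i<k. f i) = f j + (\<Sum>i\<in>{..<k}-{j}. f i)"
    using sum.remove[of "{..<k}" j f] assms(1) by simp
  also have "(\<Sum>i\<in>{..<k}-{j}. f i) = f j' + (\<Sum>i\<in>{..<k}-{j}-{j'}. f i)"
    using assms by (intro sum.remove) auto
  also have "{..<k}-{j}-{j'} = {..<k}-{j,j'}" by auto
  finally show ?thesis by simp
qed

lemma card_two: "j < k \<Longrightarrow> j' < k \<Longrightarrow> j \<noteq> j' \<Longrightarrow> card ({..<k}-{j,j'}) = k - 2"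
proof -
  assume h: "j < k" "j' < k" "j \<noteq> j'"
  have "card ({..<k}-{j,j'}) = card {..<k} - card {j,j'}"
    using h by (intro card_Diff_subset) auto
  then show ?thesis using h(3) by simp
qed

lemma sum_list_map2: "length xs = length ys \<Longrightarrow> sum_list (map2 (+) xs ys) = sum_list xs + (sum_list ys :: nat)"
  by (induction xs ys rule: list_induct2) auto

lemma caseB:
  assumes lb: "length b = k" and dgb: "deg b = (k-2)*(2^d-1)"
    and bi: "\<forall>i<k. b!i = a!i + t!i"
    and ya: "\<forall>i<k. \<forall>q<n'. bt q (y!i) = bt q (a!i)" and la: "length a = k"
    and pre: "\<forall>q<Suc n'. omega (Suc q) y = k-2"
    and ly: "length y = k" and nd: "Suc n' < d"
    and od: "\<forall>i<k. odd (a!i choose t!i)"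
    and p: "p < n'" "\<forall>i<k. 2^p dvd t!i" "i0 < k" "\<not> 2^Suc p dvd t!i0"
  shows "b \<in> minus_mons k d"
proof -
  have w: "\<And>i. i < k \<Longrightarrow> t!i = 2^p * (t!i div 2^p)" using p(2) by simp
  have low: "\<And>q. q < p \<Longrightarrow> omega (Suc q) b = k - 2"
  proof -
    fix q assume q: "q < p"
    have "\<And>i. i < k \<Longrightarrow> bt q (b!i) = bt q (y!i)"
    proof -
      fix i assume i: "i < k"
      have "bt q (b!i) = bt q (a!i + 2^p * (t!i div 2^p))" using bi i w by simp
      also have "\<dots> = bt q (a!i)" using q by (rule bt_add)
      also have "\<dots> = bt q (y!i)" using ya i q p(1) by simp
      finally show "bt q (b!i) = bt q (y!i)" .
    qed
    then have "omega (Suc q) b = omega (Suc q) y" unfolding omega_Suc lb ly by (intro sum.cong) auto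
    then show "omega (Suc q) b = k - 2" using pre q p(1) by simp
  qed
  have cmp: "\<And>i. i < k \<Longrightarrow> bt p (b!i) \<le> bt p (a!i) \<and> (odd (t!i div 2^p) \<longrightarrow> bt p (b!i) < bt p (a!i))"
  proof -
    fix i assume i: "i < k"
    define v where "v = t!i div 2^p"
    define A where "A = a!i div 2^p"
    define B where "B = b!i div 2^p"
    have "B = A + v"
      using bi i w[OF i] unfolding v_def A_def B_def by (metis div_add)
    then have e: "B mod 2 = (A + v) mod 2" by simp
    have ba: "bt p (b!i) = B mod 2" "bt p (a!i) = A mod 2" unfolding bt_def A_def B_def by simp_all
    show "bt p (b!i) \<le> bt p (a!i) \<and> (odd v \<longrightarrow> bt p (b!i) < bt p (a!i))"
    proof (cases "odd v")
      case True
      have "odd (a!i choose (2^p * v))" using od i w[OF i] unfolding v_def by simp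
      then have "odd (a!i div 2^p)" using True L2 by blast
      then have "odd A" unfolding A_def .
      then show ?thesis unfolding ba using True e by presburger
    next
      case False
      then show ?thesis unfolding ba using e by presburger
    qed
  qed
  have oi0: "odd (t!i0 div 2^p)"
  proof (rule ccontr)
    assume "\<not> odd (t!i0 div 2^p)"
    then obtain u where "t!i0 div 2^p = 2 * u" by (auto elim: evenE)
    then have "t!i0 = 2^Suc p * u" using w[OF p(3)] by simp
    then show False using p(4) by simp
  qed
  have "omega (Suc p) b < omega (Suc p) a"
    unfolding omega_Suc lb la
  proof (rule sum_strict_mono_ex1)
    show "\<forall>i\<in>{..<k}. bt p (b!i) \<le> bt p (a!i)" using cmp by simp
    show "\<exists>i\<in>{..<k}. bt p (b!i) < bt p (a!i)" using cmp[OF p(3)] oi0 p(3) by auto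
  qed simp
  moreover have "omega (Suc p) a = omega (Suc p) y"
    unfolding omega_Suc la ly using ya p(1) by (intro sum.cong) auto
  ultimately have lt: "omega (Suc p) b < k - 2" using pre p(1) by simp
  have "wlex_less (\<lambda>i. omega i b) (wvec k d)"
    unfolding wlex_less_def
  proof (intro exI[of _ "Suc p"] conjI allI impI)
    fix i assume "1 \<le> i \<and> i < Suc p"
    then obtain q where "i = Suc q" "q < p" by (cases i) auto
    then show "omega i b = wvec k d i" using low nd p(1) unfolding wvec_def by simp
  next
    show "omega (Suc p) b < wvec k d (Suc p)" using lt nd p(1) unfolding wvec_def by simp
  qed simp
  then show ?thesis unfolding minus_mons_def using lb dgb by simp
qed




lemma caseA:
  assumes ly: "length y = k" and lb: "length b = k"
    and bi: "\<forall>i<k. b!i = (if i = j' then y!i + 2^n' else if i = j then y!i - 2^n' else y!i)"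
    and jj: "j < k" "j' < k" "j \<noteq> j'"
    and bj0: "bt n' (y!j) = 0" and ones: "\<forall>i<k. bt (Suc n') (y!i) = 1"
    and oj': "odd (y!j' div 2^n')"
    and pre: "\<forall>q<Suc n'. omega (Suc q) y = k-2"
  shows "\<forall>q<Suc (Suc n'). omega (Suc q) b = k-2"
proof -
  define h where "h = (2::nat)^n'"
  define X where "X = y!j div h"
  define Y where "Y = y!j' div h"
  have X0: "X mod 2 = 0" using bj0 unfolding bt_def X_def h_def .
  have X1: "X div 2 mod 2 = 1" using ones jj(1) unfolding bt_Suc X_def h_def by simp
  have Y0: "Y mod 2 = 1" using oj' unfolding Y_def h_def by presburger
  have Y1: "Y div 2 mod 2 = 1" using ones jj(2) unfolding bt_Suc Y_def h_def by simp
  have "0 < X" using X1 by (cases X) auto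
  then have hy: "h \<le> y!j" unfolding X_def h_def by (simp add: div_greater_zero_iff)
  have bj: "b!j = y!j - h" using bi jj unfolding h_def by simp
  have bj': "b!j' = y!j' + h * 1" using bi jj unfolding h_def by simp
  have yj: "y!j = b!j + h * 1" using bj hy by simp
  have bo: "\<And>i. i < k \<Longrightarrow> i \<noteq> j \<Longrightarrow> i \<noteq> j' \<Longrightarrow> b!i = y!i" using bi by simp
  have lowbits: "\<And>i q. i < k \<Longrightarrow> q < n' \<Longrightarrow> bt q (b!i) = bt q (y!i)"
  proof -
    fix i q assume i: "i < k" and q: "q < n'"
    consider "i = j'" | "i = j" | "i \<noteq> j" "i \<noteq> j'" by blast
    then show "bt q (b!i) = bt q (y!i)"
    proof cases
      case 1 then show ?thesis using bj' bt_add[OF q, of "y!j'" 1] unfolding h_def by simp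
    next
      case 2 then show ?thesis using yj bt_add[OF q, of "b!j" 1] unfolding h_def by simp
    next
      case 3 then show ?thesis using bo i by simp
    qed
  qed
  have DX: "b!j div h = X - 1"
  proof -
    have "X = b!j div h + 1" unfolding X_def h_def using yj unfolding h_def by (metis div_add)
    then show ?thesis by simp
  qed
  have DY: "b!j' div h = Y + 1" unfolding Y_def h_def using bj' unfolding h_def by (metis div_add)
  have b1a: "bt n' (b!j) = 1"
    unfolding bt_def h_def[symmetric] DX using X0 X1 by presburger
  have b1b: "bt (Suc n') (b!j) = 0"
    unfolding bt_Suc h_def[symmetric] DX using X0 X1 by presburger
  have b2a: "bt n' (b!j') = 0"
    unfolding bt_def h_def[symmetric] DY using Y0 Y1 by presburger
  have b2b: "bt (Suc n') (b!j') = 0"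
    unfolding bt_Suc h_def[symmetric] DY using Y0 Y1 by presburger
  note b1 = b1a b1b
  note b2 = b2a b2b
  have y2: "bt n' (y!j') = 1" unfolding bt_def h_def[symmetric] Y_def[symmetric] using Y0 .
  define S where "S = {..<k} - {j,j'}"
  have Sb: "\<And>i. i \<in> S \<Longrightarrow> b!i = y!i" unfolding S_def using bo by auto
  have q1: "omega (Suc n') b = k - 2"
  proof -
    have "omega (Suc n') b = (\<Sum>i\<in>S. bt n' (b!i)) + bt n' (b!j) + bt n' (b!j')"
      unfolding omega_Suc lb S_def by (rule two_sum[OF jj])
    also have "(\<Sum>i\<in>S. bt n' (b!i)) = (\<Sum>i\<in>S. bt n' (y!i))" using Sb by simp
    also have "omega (Suc n') y = (\<Sum>i\<in>S. bt n' (y!i)) + bt n' (y!j) + bt n' (y!j')"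
      unfolding omega_Suc ly S_def by (rule two_sum[OF jj])
    ultimately have "omega (Suc n') b = omega (Suc n') y" using b1 b2 y2 bj0 by simp
    then show ?thesis using pre by simp
  qed
  have q2: "omega (Suc (Suc n')) b = k - 2"
  proof -
    have "omega (Suc (Suc n')) b = (\<Sum>i\<in>S. bt (Suc n') (b!i)) + bt (Suc n') (b!j) + bt (Suc n') (b!j')"
      unfolding omega_Suc lb S_def by (rule two_sum[OF jj])
    also have "(\<Sum>i\<in>S. bt (Suc n') (b!i)) = (\<Sum>i\<in>S. 1)"
      using Sb ones unfolding S_def by (intro sum.cong) auto
    also have "\<dots> = k - 2" unfolding S_def using card_two[OF jj] by simp
    finally show ?thesis using b1 b2 by simp
  qed
  show ?thesis
  proof (intro allI impI)
    fix q assume q: "q < Suc (Suc n')"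
    consider "q < n'" | "q = n'" | "q = Suc n'" using q by linarith
    then show "omega (Suc q) b = k - 2"
    proof cases
      case 1
      have "omega (Suc q) b = omega (Suc q) y" unfolding omega_Suc lb ly
        using lowbits 1 by (intro sum.cong) auto
      then show ?thesis using pre 1 by simp
    next
      case 2 then show ?thesis using q1 by simp
    next
      case 3 then show ?thesis using q2 by simp
    qed
  qed
qed




lemma step:
  assumes k4: "k \<ge> 4" and ly: "length y = k" and dg: "deg y = (k-2)*(2^d-1)"
    and hb: "j0 < k" "y!j0 \<ge> 2^d" and nd: "Suc n' < d"
    and pre: "\<forall>q<Suc n'. omega (Suc q) y = k-2"
    and jk: "j < k" "bt n' (y!j) = 0" and ones: "\<forall>i<k. bt (Suc n') (y!i) = 1"
    and IH: "\<And>b. length b = k \<Longrightarrow> deg b = (k-2)*(2^d-1) \<Longrightarrow> (\<exists>j0<k. b!j0 \<ge> 2^d)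
              \<Longrightarrow> (\<forall>q<Suc (Suc n'). omega (Suc q) b = k-2) \<Longrightarrow> {b} \<in> V k d"
  shows "{y} \<in> V k d"
proof -
  define h where "h = (2::nat)^n'"
  define a where "a = y[j := y!j - h]"
  have la: "length a = k" using ly unfolding a_def by simp
  define X where "X = y!j div h"
  have X0: "X mod 2 = 0" using jk(2) unfolding bt_def X_def h_def .
  have X1: "X div 2 mod 2 = 1" using ones jk(1) unfolding bt_Suc X_def h_def by simp
  have "0 < X" using X1 by (cases X) auto
  then have hy: "h \<le> y!j" unfolding X_def h_def by (simp add: div_greater_zero_iff)
  have aj: "a!j = y!j - h" unfolding a_def using jk(1) ly by simp
  have ao: "\<And>i. i \<noteq> j \<Longrightarrow> a!i = y!i" unfolding a_def by simp
  have yj: "y!j = a!j + h*1" using aj hy by simp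
  have "X = a!j div h + 1" unfolding X_def h_def using yj unfolding h_def by (metis div_add)
  moreover define Aj where "Aj = a!j div 2^n'"
  ultimately have "X = Aj + 1" unfolding h_def by simp
  then have "odd Aj" using X0 by presburger
  then have oddaj: "odd (a!j div 2^n')" unfolding Aj_def .
  define t0 where "t0 = (replicate k (0::nat))[j := h]"
  have lt0: "length t0 = k" unfolding t0_def by simp
  have t0i: "\<And>i. i < k \<Longrightarrow> t0!i = (if i = j then h else 0)" unfolding t0_def by simp
  have "sum_list t0 = (\<Sum>i<k. t0!i)" using lt0 by (simp add: sum_list_sum_nth atLeast0LessThan)
  also have "\<dots> = (\<Sum>i<k. if i = j then h else 0)" using t0i by (intro sum.cong) auto
  also have "\<dots> = h" using jk(1) by simp
  finally have st0: "sum_list t0 = h" .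
  have ymap: "y = map2 (+) a t0"
  proof (rule nth_equalityI)
    show "length y = length (map2 (+) a t0)" using la lt0 ly by simp
    fix i assume "i < length y"
    then have i: "i < k" using ly by simp
    show "y!i = map2 (+) a t0 ! i"
      using i la lt0 t0i[OF i] yj ao by (cases "i = j") auto
  qed
  have yS: "y \<in> Sq_mon h a"
    unfolding Sq_mon_def
  proof (intro CollectI exI conjI allI impI)
    show "y = map2 (+) a t0" by (rule ymap)
    show "length t0 = length a" using la lt0 by simp
    show "sum_list t0 = h" by (rule st0)
    fix i assume "i < length a"
    then have i: "i < k" using la by simp
    show "odd (a!i choose t0!i)"
    proof (cases "i = j")
      case True
      then show ?thesis using t0i[OF i] oddaj L1[of "a!j" n'] unfolding h_def by simp
    next
      case False
      then show ?thesis using t0i[OF i] by simp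
    qed
  qed
  have hpos: "0 < h" unfolding h_def by simp
  have hd: "h < 2^d" unfolding h_def using nd by (intro power_strict_increasing) auto
  have Hit: "Sq_mon h a \<in> V k d" using V_hit hit_Sq_single[OF la hpos hd] by blast
  define R where "R = Sq_mon h a - {y}"
  have ysplit: "{y} = padd (Sq_mon h a) R" unfolding R_def padd_def using yS by blast
  have ajd: "a!j0 \<ge> 2^d"
  proof (cases "j0 = j")
    case True
    have "y!j - h \<ge> 2^d"
      using high_keep[of d "y!j" "Suc n'" h] hb ones jk(1) nd True unfolding h_def by simp
    then show ?thesis using True aj by simp
  next
    case False then show ?thesis using ao hb by simp
  qed
  have "R \<in> V k d"
  proof (rule V_set)
    show "finite R" unfolding R_def using Sq_mon_finite by simp
    show "\<forall>b\<in>R. {b} \<in> V k d"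
    proof
      fix b assume bR: "b \<in> R"
      then have bS: "b \<in> Sq_mon h a" and bny: "b \<noteq> y" unfolding R_def by auto
      then obtain t where bt: "b = map2 (+) a t" "length t = length a" "sum_list t = h"
        "\<forall>i<length a. odd (a!i choose t!i)" unfolding Sq_mon_def by blast
      have lt: "length t = k" using bt la by simp
      have lb: "length b = k" using bt lt la by simp
      have bi: "\<forall>i<k. b!i = a!i + t!i" using bt la lt by simp
      have od: "\<forall>i<k. odd (a!i choose t!i)" using bt(4) la by simp
      have "deg b = sum_list a + h" unfolding deg_def bt(1) using sum_list_map2[OF bt(2)[symmetric]] bt(3) by simp
      moreover have "deg y = sum_list a + h" unfolding deg_def using ymap sum_list_map2[of a t0] la lt0 st0 by simp
      ultimately have dgb: "deg b = (k-2)*(2^d-1)" using dg by simp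
      have hib: "\<exists>j0<k. b!j0 \<ge> 2^d"
      proof (intro exI conjI)
        show "j0 < k" by (rule hb(1))
        show "b!j0 \<ge> 2^d" using bi hb(1) ajd by simp
      qed
      have tsum: "sum_list t = (\<Sum>i<k. t!i)" using lt by (simp add: sum_list_sum_nth atLeast0LessThan)
      have "\<exists>i<k. t!i \<noteq> 0"
      proof (rule ccontr)
        assume "\<not> (\<exists>i<k. t!i \<noteq> 0)"
        then have "(\<Sum>i<k. t!i) = 0" by simp
        then show False using tsum bt(3) hpos by simp
      qed
      then obtain i1 where i1: "i1 < k" "t!i1 \<noteq> 0" by blast
      define P where "P = (\<lambda>q. \<exists>i<k. \<not> 2^Suc q dvd t!i)"
      have "t!i1 < 2^Suc (t!i1)"
      proof -
        have "t!i1 < 2^(t!i1)" by (rule less_exp)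
        also have "\<dots> < 2^Suc (t!i1)" by simp
        finally show ?thesis .
      qed
      then have "\<not> 2^Suc (t!i1) dvd t!i1" using i1(2) by (intro nat_dvd_not_less) auto
      then have "P (t!i1)" unfolding P_def using i1(1) by blast
      define p where "p = (LEAST q. P q)"
      have Pp: "P p" unfolding p_def by (rule LeastI) fact
      have alld: "\<forall>i<k. 2^p dvd t!i"
      proof (cases p)
        case 0 then show ?thesis by simp
      next
        case (Suc p')
        have "\<not> P p'" unfolding p_def using Suc by (metis lessI not_less_Least p_def)
        then show ?thesis unfolding P_def using Suc by simp
      qed
      obtain i0 where i0: "i0 < k" "\<not> 2^Suc p dvd t!i0" using Pp unfolding P_def by blast
      show "{b} \<in> V k d"
      proof (cases "p < n'")
        case True
        have ya: "\<forall>i<k. \<forall>q<n'. bt q (y!i) = bt q (a!i)"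
        proof (intro allI impI)
          fix i q assume "i < k" "q < n'"
          show "bt q (y!i) = bt q (a!i)"
          proof (cases "i = j")
            case True
            then show ?thesis using yj bt_add[OF \<open>q < n'\<close>, of "a!j" 1] unfolding h_def by simp
          next
            case False then show ?thesis using ao by simp
          qed
        qed
        have "b \<in> minus_mons k d"
          by (rule caseB[OF lb dgb bi ya la pre ly nd od True alld i0])
        then show ?thesis by (rule V_minus)
      next
        case False
        have "h dvd 2^p" unfolding h_def using False by (intro le_imp_power_dvd) simp
        then have dv: "\<forall>i<k. h dvd t!i" using alld dvd_trans by blast
        have le: "\<forall>i<k. t!i \<le> h"
        proof (intro allI impI)
          fix i assume "i < k"
          then have "t!i \<in> set t" using lt by simp
          then have "t!i \<le> sum_list t" by (rule member_le_sum_list) auto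
          then show "t!i \<le> h" using bt(3) by simp
        qed
        have th: "t!i1 = h"
        proof -
          have "h \<le> t!i1" using dv i1 by (intro dvd_imp_le) auto
          then show ?thesis using le i1(1) by (simp add: le_antisym)
        qed
        have tz: "\<And>i. i < k \<Longrightarrow> i \<noteq> i1 \<Longrightarrow> t!i = 0"
        proof -
          fix i assume i: "i < k" "i \<noteq> i1"
          have "(\<Sum>i<k. t!i) = (\<Sum>i\<in>{..<k}-{i1,i}. t!i) + t!i1 + t!i"
            using i i1(1) by (intro two_sum) auto
          then have "h \<ge> h + t!i" using tsum bt(3) th by simp
          then show "t!i = 0" by simp
        qed
        have ij: "i1 \<noteq> j"
        proof
          assume e: "i1 = j"
          have "b = y"
          proof (rule nth_equalityI)
            show "length b = length y" using lb ly by simp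
            fix i assume "i < length b"
            then have i: "i < k" using lb by simp
            show "b!i = y!i"
            proof (cases "i = j")
              case True then show ?thesis using bi i th e yj by simp
            next
              case False then show ?thesis using bi i tz[OF i] e ao by simp
            qed
          qed
          then show False using bny by simp
        qed
        have bi2: "\<forall>i<k. b!i = (if i = i1 then y!i + 2^n' else if i = j then y!i - 2^n' else y!i)"
        proof (intro allI impI)
          fix i assume i: "i < k"
          show "b!i = (if i = i1 then y!i + 2^n' else if i = j then y!i - 2^n' else y!i)"
            using bi i th tz[OF i] ij ao aj unfolding h_def by auto
        qed
        have "odd (a!i1 choose t!i1)" using od i1(1) by blast
        then have "odd (a!i1 choose 2^n')" unfolding th h_def .
        then have oj': "odd (y!i1 div 2^n')" using L1 ao[OF ij] by simp
        have "\<forall>q<Suc (Suc n'). omega (Suc q) b = k-2"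
          by (rule caseA[OF ly lb bi2 jk(1) i1(1) ij[symmetric] jk(2) ones oj' pre])
        then show ?thesis using IH lb dgb hib by blast
      qed
    qed
  qed
  then show ?thesis using ysplit Hit V_padd by metis
qed




lemma main:
  assumes k4: "k \<ge> 4"
  shows "\<forall>y. length y = k \<and> deg y = (k-2)*(2^d-1) \<and> omega 1 y < k \<and> (\<exists>j0<k. y!j0 \<ge> 2^d)
           \<and> (\<forall>q<n. omega (Suc q) y = k-2) \<longrightarrow> {y} \<in> V k d"
proof (induction "d - n" arbitrary: n rule: less_induct)
  case less
  show ?case
  proof (intro allI impI)
    fix y assume H: "length y = k \<and> deg y = (k-2)*(2^d-1) \<and> omega 1 y < k \<and> (\<exists>j0<k. y!j0 \<ge> 2^d)
           \<and> (\<forall>q<n. omega (Suc q) y = k-2)"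
    then have ly: "length y = k" and dg: "deg y = (k-2)*(2^d-1)" and o1: "omega (Suc 0) y < k"
      and pre: "\<forall>q<n. omega (Suc q) y = k-2" by simp_all
    obtain j0 where hb: "j0 < k" "y!j0 \<ge> 2^d" using H by blast
    have nd: "n < d"
    proof (rule ccontr)
      assume "\<not> n < d"
      then have "\<forall>q<d. omega (Suc q) y = k-2" using pre by simp
      then show False by (rule no_full_prefix[OF ly dg hb])
    qed
    have IHs: "\<And>y. length y = k \<Longrightarrow> deg y = (k-2)*(2^d-1) \<Longrightarrow> (\<exists>j0<k. y!j0 \<ge> 2^d)
       \<Longrightarrow> (\<forall>q<Suc n. omega (Suc q) y = k-2) \<Longrightarrow> {y} \<in> V k d"
    proof -
      fix y :: "nat list" assume a: "length y = k" "deg y = (k-2)*(2^d-1)" "\<exists>j0<k. y!j0 \<ge> 2^d"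
        "\<forall>q<Suc n. omega (Suc q) y = k-2"
      have "omega (Suc 0) y = k - 2" using a(4) by simp
      then have "omega 1 y < k" using k4 by simp
      moreover have "d - Suc n < d - n" using nd by simp
      ultimately show "{y} \<in> V k d" using less[of "Suc n"] a by blast
    qed
    consider (lt) "omega (Suc n) y < k-2" | (eq) "omega (Suc n) y = k-2" | (gt) "omega (Suc n) y > k-2"
      by linarith
    then show "{y} \<in> V k d"
    proof cases
      case lt
      have "wlex_less (\<lambda>i. omega i y) (wvec k d)"
        unfolding wlex_less_def
      proof (intro exI[of _ "Suc n"] conjI allI impI)
        fix i assume "1 \<le> i \<and> i < Suc n"
        then obtain q where "i = Suc q" "q < n" by (cases i) auto
        then show "omega i y = wvec k d i" using pre nd unfolding wvec_def by simp
      next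
        show "omega (Suc n) y < wvec k d (Suc n)" using lt nd unfolding wvec_def by simp
      qed simp
      then have "y \<in> minus_mons k d" unfolding minus_mons_def using ly dg by simp
      then show ?thesis by (rule V_minus)
    next
      case eq
      have "\<forall>q<Suc n. omega (Suc q) y = k-2"
      proof (intro allI impI)
        fix q assume "q < Suc n"
        then show "omega (Suc q) y = k-2" using pre eq by (cases "q = n") auto
      qed
      then show ?thesis using IHs ly dg hb by blast
    next
      case gt
      define c where "c = omega (Suc n) y"
      have "c mod 2 = k mod 2" unfolding c_def using parity[OF ly dg nd pre] k4 by simp
      moreover have "c \<le> k" unfolding c_def using omega_le[of n y] ly by simp
      moreover have "c > k - 2" unfolding c_def using gt .
      ultimately have ck: "c = k" using k4 by presburger
      have "n \<noteq> 0"
      proof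
        assume "n = 0"
        then show False using o1 ck unfolding c_def by simp
      qed
      then obtain n' where n: "n = Suc n'" by (cases n) auto
      have "omega (Suc n') y = k - 2" using pre n by simp
      then have "(\<Sum>i<k. bt n' (y!i)) < k" unfolding omega_Suc ly using k4 by simp
      then obtain j where jk: "j < k" "bt n' (y!j) = 0" using some_zero by blast
      have "(\<Sum>i<k. bt (Suc n') (y!i)) = k" using ck unfolding c_def omega_Suc ly n .
      then have ones: "\<forall>i<k. bt (Suc n') (y!i) = 1" using all_ones by blast
      show ?thesis
        using step[OF k4 ly dg hb, of n' j] nd pre jk ones IHs unfolding n by blast
    qed
  qed
qed

theorem lemma3:
  fixes k d :: nat and x :: monom
  assumes "k \<ge> 4" and "d \<ge> 1"
    and "length x = k" and "deg x = (k - 2) * (2 ^ d - 1)"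
    and "omega 1 x < k"
    and "\<exists>r>d. omega r x > 0"
  shows "\<exists>p q. p \<in> Pminus k d \<and> q \<in> hit k d \<and> {x} = padd p q"
proof -
  obtain r where r: "r > d" "omega r x > 0" using assms(6) by blast
  then obtain q where q: "r = Suc q" by (cases r) auto
  have "0 < (\<Sum>i<k. bt q (x!i))" using r(2) unfolding q omega_Suc assms(3) .
  then obtain i where i: "i < k" "bt q (x!i) > 0"
  proof -
    assume h: "\<And>i. i < k \<Longrightarrow> 0 < bt q (x!i) \<Longrightarrow> thesis"
    show thesis
    proof (rule ccontr)
      assume "\<not> thesis"
      then have "\<forall>i<k. bt q (x!i) = 0" using h by auto
      then have "(\<Sum>i<k. bt q (x!i)) = 0" by simp
      then show False using \<open>0 < (\<Sum>i<k. bt q (x!i))\<close> by simp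
    qed
  qed
  then have "0 < x!i div 2^q" unfolding bt_def by (cases "x!i div 2^q") auto
  then have "2^q \<le> x!i" by (simp add: div_greater_zero_iff)
  moreover have "(2::nat)^d \<le> 2^q" using r(1) q by (intro power_increasing) auto
  ultimately have "x!i \<ge> 2^d" by linarith
  then have "{x} \<in> V k d" using main[OF assms(1), of d 0] assms(3,4,5) i(1) by blast
  then show ?thesis unfolding V_def by blast
qed


end
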